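(* Let $(E,\mathcal{I})$ be the partition matroid given by a partition $E_1,\dots,E_b$ of $E$ and positive integers $k_z\le|E_z|$. Suppose $f:2^E\times O^E\to\mathbb{R}_{\ge0}$ is adaptive monotone and adaptive submodular with respect to $p(\phi)$. Then the adaptive hybrid policy $\pi^m=\pi^{mw}@\pi^{ma}$ satisfies $f_{avg}(\pi^*_{avg})\le 3\,f_{avg}(\pi^m)$, where $\pi^*_{avg}$ maximizes $f_{avg}(\pi)$ over policies $\pi$ with $E(\pi,\phi)\in\mathcal{I}$ for all $\phi\in U^+$.
   Context: Setting. $E$ is a finite set of $n$ items and $O$ a finite set of states. A realization is a function $\phi:E\to O$; $p$ is a probability distribution (prior) on the set of all realizations, $\Phi$ denotes a random realization with law $p$, and $U^+=\{\phi: p(\phi)>0\}$. A partial realization is a function $\psi:S\to O$ with $S\subseteq E$, $\mathrm{dom}(\psi)=S$; it is identified with the set of pairs $\{(e,\psi(e)):e\in S\}$, so $\psi\subseteq\psi'$ means $\mathrm{dom}(\psi)\subseteq\mathrm{dom}(\psi')$ and they agree on $\mathrm{dom}(\psi)$. A realization $\phi$ is consistent with $\psi$, written $\phi\sim\psi$, if it agrees with $\psi$ on $\mathrm{dom}(\psi)$. Only partial realizations with $\Pr[\Phi\sim\psi]>0$ are considered, and $p(\phi\mid\psi)=\Pr[\Phi=\phi\mid\Phi\sim\psi]$. For $S\subseteq E$ and a partial realization $\psi$, $f(S,\psi)=\mathbb{E}[f(S,\Phi)\mid\Phi\sim\psi]$. For $e\notin\mathrm{dom}(\psi)$, let $O(e,\psi)=\{o\in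 O:\exists\phi\text{ with }p(\phi\mid\psi)>0,\ \phi(e)=o\}$ and define the worst-case marginal utility $f_{wc}(e\mid\psi)=\min_{o\in O(e,\psi)}\{f(\mathrm{dom}(\psi)\cup\{e\},\psi\cup\{(e,o)\})-f(\mathrm{dom}(\psi),\psi)\}$ and the expected marginal utility $f_{avg}(e\mid\psi)=\mathbb{E}[f(\mathrm{dom}(\psi)\cup\{e\},\Phi)-f(\mathrm{dom}(\psi),\Phi)\mid\Phi\sim\psi]$. $f$ is adaptive submodular if $f_{avg}(e\mid\psi)\ge f_{avg}(e\mid\psi')$ for all partial realizations $\psi\subseteq\psi'$ and $e\in E\setminus\mathrm{dom}(\psi')$, and adaptive monotone if $f_{avg}(e\mid\psi)\ge0$ for all $\psi$ and $e\notin\mathrm{dom}(\psi)$. Policies. A (deterministic) policy $\pi$ is a rule which, given the current observation (the partial realization of the items selected so far), either selects a new item or stops; after an item $e$ is selected under realization $\phi$, the state $\phi(e)$ is observed. $E(\pi,\phi)$ is the set of items selected by $\pi$ under $\phi$, and $f_{avg}(\pi)=\mathbb{E}[f(E(\pi,\Phi),\Phi)]$. The concatenation $\pi@\pi'$ runs $\pi$ and then runs $\pi'$ from scratch, ignoring the observations obtained by $\pi$; its selected set is the union of the two. Partition matroid: $\mathcal{I}=\{I\subseteq E:|I\cap E_z|\le k_z\ \forall z\in[b]\}$. Policy $\pi^{mw}$: starting from the empty observation $\psi=\emptyset$, for $z=1,\dots,b$ in turn, perform $\lfloor k_z/2\rfloor$ iterations, each selecting $e\in\arg\max_{e\in E_z\setminus\mathrm{dom}(\psi)}f_{wc}(e\mid\psi)$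 for the current observation $\psi$, observing $\Phi(e)$ and adding $(e,\Phi(e))$ to $\psi$. Policy $\pi^{ma}$: identical except that each meta-round $z$ performs $\lceil k_z/2\rceil$ iterations and uses $f_{avg}(e\mid\psi)$ in place of $f_{wc}(e\mid\psi)$. Ties are broken arbitrarily. $\pi^m=\pi^{mw}@\pi^{ma}$. *)

theory Defs
  imports "HOL-Probability.Probability"
begin

text \<open>Ground set of items = the finite type 'e; states = the finite type 'o.
  Realizations are total functions 'e => 'o, the prior is a pmf on them.
  Partial realizations are maps 'e => 'o option (subset = map_le).\<close>

definition consistent :: "('e \<Rightarrow> 'o) \<Rightarrow> ('e \<rightharpoonup> 'o) \<Rightarrow> bool" where
  "consistent \<phi> \<psi> \<longleftrightarrow> (\<forall>e\<in>dom \<psi>. \<psi> e = Some (\<phi> e))"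

definition prob_cons :: "('e \<Rightarrow> 'o) pmf \<Rightarrow> ('e \<rightharpoonup> 'o) \<Rightarrow> real" where
  "prob_cons p \<psi> = measure_pmf.prob p {\<phi>. consistent \<phi> \<psi>}"

definition cexp :: "('e::finite \<Rightarrow> 'o::finite) pmf \<Rightarrow> ('e \<rightharpoonup> 'o) \<Rightarrow> (('e \<Rightarrow> 'o) \<Rightarrow> real) \<Rightarrow> real" where
  "cexp p \<psi> X = (\<Sum>\<phi>\<in>{\<phi>. consistent \<phi> \<psi>}. pmf p \<phi> * X \<phi>) / prob_cons p \<psi>"

definition fpart :: "('e::finite \<Rightarrow> 'o::finite) pmf \<Rightarrow> ('e set \<Rightarrow> ('e \<Rightarrow> 'o) \<Rightarrow> real)
    \<Rightarrow> 'e set \<Rightarrow> ('e \<rightharpoonup> 'o) \<Rightarrow> real" where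
  "fpart p f S \<psi> = cexp p \<psi> (f S)"

definition favg_marg :: "('e::finite \<Rightarrow> 'o::finite) pmf \<Rightarrow> ('e set \<Rightarrow> ('e \<Rightarrow> 'o) \<Rightarrow> real)
    \<Rightarrow> 'e \<Rightarrow> ('e \<rightharpoonup> 'o) \<Rightarrow> real" where
  "favg_marg p f e \<psi> = cexp p \<psi> (\<lambda>\<phi>. f (insert e (dom \<psi>)) \<phi> - f (dom \<psi>) \<phi>)"

definition ostates :: "('e \<Rightarrow> 'o) pmf \<Rightarrow> 'e \<Rightarrow> ('e \<rightharpoonup> 'o) \<Rightarrow> 'o set" where
  "ostates p e \<psi> = {s. \<exists>\<phi>. pmf p \<phi> > 0 \<and> consistent \<phi> \<psi> \<and> \<phi> e = s}"

definition fwc_marg :: "('e::finite \<Rightarrow> 'o::finite) pmf \<Rightarrow> ('e set \<Rightarrow> ('e \<Rightarrow> 'o) \<Rightarrow> real)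
    \<Rightarrow> 'e \<Rightarrow> ('e \<rightharpoonup> 'o) \<Rightarrow> real" where
  "fwc_marg p f e \<psi> =
     Min ((\<lambda>s. fpart p f (insert e (dom \<psi>)) (\<psi>(e \<mapsto> s)) - fpart p f (dom \<psi>) \<psi>) ` ostates p e \<psi>)"

definition adaptive_submodular :: "('e::finite \<Rightarrow> 'o::finite) pmf \<Rightarrow> ('e set \<Rightarrow> ('e \<Rightarrow> 'o) \<Rightarrow> real) \<Rightarrow> bool" where
  "adaptive_submodular p f \<longleftrightarrow>
     (\<forall>\<psi> \<psi>' e. \<psi> \<subseteq>\<^sub>m \<psi>' \<and> prob_cons p \<psi>' > 0 \<and> e \<notin> dom \<psi>' \<longrightarrow>
        favg_marg p f e \<psi> \<ge> favg_marg p f e \<psi>')"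

definition adaptive_monotone :: "('e::finite \<Rightarrow> 'o::finite) pmf \<Rightarrow> ('e set \<Rightarrow> ('e \<Rightarrow> 'o) \<Rightarrow> real) \<Rightarrow> bool" where
  "adaptive_monotone p f \<longleftrightarrow>
     (\<forall>\<psi> e. prob_cons p \<psi> > 0 \<and> e \<notin> dom \<psi> \<longrightarrow> favg_marg p f e \<psi> \<ge> 0)"

text \<open>A deterministic policy maps the current observation to the next item (Some e) or stops (None).
  Selecting an already selected item does not change the observation (acts as stopping).\<close>
type_synonym ('e, 'o) policy = "('e \<rightharpoonup> 'o) \<Rightarrow> 'e option"

definition pstep :: "('e, 'o) policy \<Rightarrow> ('e \<Rightarrow> 'o) \<Rightarrow> ('e \<rightharpoonup> 'o) \<Rightarrow> ('e \<rightharpoonup> 'o)" where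
  "pstep \<pi> \<phi> \<psi> = (case \<pi> \<psi> of None \<Rightarrow> \<psi> | Some e \<Rightarrow> \<psi>(e \<mapsto> \<phi> e))"

definition prun :: "('e, 'o) policy \<Rightarrow> ('e \<Rightarrow> 'o) \<Rightarrow> nat \<Rightarrow> ('e \<rightharpoonup> 'o)" where
  "prun \<pi> \<phi> t = (pstep \<pi> \<phi> ^^ t) Map.empty"

text \<open>E(pi, phi): after card(E) steps the run has reached its final observation.\<close>
definition Esel :: "('e::finite, 'o) policy \<Rightarrow> ('e \<Rightarrow> 'o) \<Rightarrow> 'e set" where
  "Esel \<pi> \<phi> = dom (prun \<pi> \<phi> (card (UNIV :: 'e set)))"

definition favg_pol :: "('e::finite \<Rightarrow> 'o::finite) pmf \<Rightarrow> ('e set \<Rightarrow> ('e \<Rightarrow> 'o) \<Rightarrow> real)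
    \<Rightarrow> ('e, 'o) policy \<Rightarrow> real" where
  "favg_pol p f \<pi> = measure_pmf.expectation p (\<lambda>\<phi>. f (Esel \<pi> \<phi>) \<phi>)"

text \<open>f_avg of the concatenation pi @ pi': selected set is the union of the two.\<close>
definition favg_concat :: "('e::finite \<Rightarrow> 'o::finite) pmf \<Rightarrow> ('e set \<Rightarrow> ('e \<Rightarrow> 'o) \<Rightarrow> real)
    \<Rightarrow> ('e, 'o) policy \<Rightarrow> ('e, 'o) policy \<Rightarrow> real" where
  "favg_concat p f \<pi> \<pi>' = measure_pmf.expectation p (\<lambda>\<phi>. f (Esel \<pi> \<phi> \<union> Esel \<pi>' \<phi>) \<phi>)"

definition pm_indep :: "nat \<Rightarrow> (nat \<Rightarrow> 'e set) \<Rightarrow> (nat \<Rightarrow> nat) \<Rightarrow> 'e set \<Rightarrow> bool" where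
  "pm_indep b Ez k I \<longleftrightarrow> (\<forall>z\<in>{1..b}. card (I \<inter> Ez z) \<le> k z)"

definition feasible_policy :: "('e::finite \<Rightarrow> 'o) pmf \<Rightarrow> nat \<Rightarrow> (nat \<Rightarrow> 'e set) \<Rightarrow> (nat \<Rightarrow> nat)
    \<Rightarrow> ('e, 'o) policy \<Rightarrow> bool" where
  "feasible_policy p b Ez k \<pi> \<longleftrightarrow> (\<forall>\<phi>. pmf p \<phi> > 0 \<longrightarrow> pm_indep b Ez k (Esel \<pi> \<phi>))"

text \<open>Meta-round schedule: c z iterations in meta-round z; cum c z iterations in rounds 1..z.\<close>
definition cum :: "(nat \<Rightarrow> nat) \<Rightarrow> nat \<Rightarrow> nat" where
  "cum c z = (\<Sum>z'\<in>{1..z}. c z')"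

definition round_of :: "(nat \<Rightarrow> nat) \<Rightarrow> nat \<Rightarrow> nat" where
  "round_of c t = (LEAST z. t < cum c z)"

text \<open>pi is (some tie-breaking of) the meta-round greedy policy with score g and schedule c:
  along every run under phi in U+, at iteration t (in meta-round z) it selects an item of
  E_z not yet selected maximizing g(psi, .), and after all sum_z c z iterations it stops.\<close>
definition greedy_policy :: "('e::finite \<Rightarrow> 'o) pmf \<Rightarrow> nat \<Rightarrow> (nat \<Rightarrow> 'e set)
    \<Rightarrow> (('e \<rightharpoonup> 'o) \<Rightarrow> 'e \<Rightarrow> real) \<Rightarrow> (nat \<Rightarrow> nat) \<Rightarrow> ('e, 'o) policy \<Rightarrow> bool" where
  "greedy_policy p b Ez g c \<pi> \<longleftrightarrow>
     (\<forall>\<phi>. pmf p \<phi> > 0 \<longrightarrow>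
        (\<forall>t < cum c b.
           let \<psi> = prun \<pi> \<phi> t; z = round_of c t in
           \<exists>e. \<pi> \<psi> = Some e \<and> e \<in> Ez z - dom \<psi> \<and> (\<forall>e'\<in>Ez z - dom \<psi>. g \<psi> e' \<le> g \<psi> e))
        \<and> \<pi> (prun \<pi> \<phi> (cum c b)) = None)"

end

theory Submission
  imports Defs
begin


lemma prun_0[simp]: "prun \<sigma> \<phi> 0 = Map.empty" by (simp add: prun_def)
lemma prun_Suc: "prun \<sigma> \<phi> (Suc t) = pstep \<sigma> \<phi> (prun \<sigma> \<phi> t)" by (simp add: prun_def)

lemma cons_le: "consistent \<phi> \<psi>' \<Longrightarrow> \<psi> \<subseteq>\<^sub>m \<psi>' \<Longrightarrow> consistent \<phi> \<psi>"
  unfolding consistent_def map_le_def by (metis domIff)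

lemma cons_agree: "consistent \<phi> \<psi> \<Longrightarrow> consistent \<phi>' \<psi> \<Longrightarrow> e \<in> dom \<psi> \<Longrightarrow> \<phi>' e = \<phi> e"
  unfolding consistent_def by force

lemma pstep_cons: "consistent \<phi> \<psi> \<Longrightarrow> consistent \<phi> (pstep \<sigma> \<phi> \<psi>)"
  unfolding consistent_def pstep_def by (auto split: option.splits)

lemma prun_cons: "consistent \<phi> (prun \<sigma> \<phi> t)"
  by (induction t) (simp_all add: prun_Suc pstep_cons, simp add: consistent_def)

lemma pstep_le: "consistent \<phi> \<psi> \<Longrightarrow> \<psi> \<subseteq>\<^sub>m pstep \<sigma> \<phi> \<psi>"
  unfolding consistent_def pstep_def map_le_def by (auto split: option.splits)

lemma prun_mono: "s \<le> t \<Longrightarrow> prun \<sigma> \<phi> s \<subseteq>\<^sub>m prun \<sigma> \<phi> t"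
proof (induction t)
  case 0 then show ?case by simp
next
  case (Suc t)
  show ?case
  proof (cases "s = Suc t")
    case False
    then have "prun \<sigma> \<phi> s \<subseteq>\<^sub>m prun \<sigma> \<phi> t" using Suc by simp
    moreover have "prun \<sigma> \<phi> t \<subseteq>\<^sub>m prun \<sigma> \<phi> (Suc t)"
      by (simp add: prun_Suc pstep_le prun_cons)
    ultimately show ?thesis by (rule map_le_trans)
  qed simp
qed

lemma dom_pstep: "dom (pstep \<sigma> \<phi> \<psi>) = (case \<sigma> \<psi> of None \<Rightarrow> dom \<psi> | Some e \<Rightarrow> insert e (dom \<psi>))"
  unfolding pstep_def by (auto split: option.splits)

lemma prun_det: "consistent \<phi>' (prun \<sigma> \<phi> t) \<Longrightarrow> prun \<sigma> \<phi>' t = prun \<sigma> \<phi> t"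
proof (induction t)
  case 0 then show ?case by simp
next
  case (Suc t)
  have le: "prun \<sigma> \<phi> t \<subseteq>\<^sub>m prun \<sigma> \<phi> (Suc t)" by (rule prun_mono) simp
  have IH: "prun \<sigma> \<phi>' t = prun \<sigma> \<phi> t" using Suc cons_le[OF Suc.prems le] by blast
  show ?case
  proof (cases "\<sigma> (prun \<sigma> \<phi> t)")
    case None then show ?thesis by (simp add: prun_Suc IH pstep_def)
  next
    case (Some e)
    have "e \<in> dom (prun \<sigma> \<phi> (Suc t))" by (simp add: prun_Suc pstep_def Some)
    then have "\<phi>' e = \<phi> e" using cons_agree[OF prun_cons Suc.prems] by blast
    then show ?thesis by (simp add: prun_Suc IH pstep_def Some)
  qed
qed

definition Cm :: "('e, 'o) policy \<Rightarrow> ('e, 'o) policy \<Rightarrow> nat \<Rightarrow> ('e \<Rightarrow> 'o) \<Rightarrow> nat \<Rightarrow> ('e \<rightharpoonup> 'o)" where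
  "Cm \<sigma> \<tau> m \<phi> i = prun \<sigma> \<phi> m ++ prun \<tau> \<phi> i"

lemma Cm_cons: "consistent \<phi> (Cm \<sigma> \<tau> m \<phi> i)"
  using prun_cons[of \<phi> \<sigma> m] prun_cons[of \<phi> \<tau> i]
  unfolding Cm_def consistent_def by (auto simp: map_add_def split: option.splits; metis domI option.inject)

lemma Cm_ge1: "prun \<sigma> \<phi> m \<subseteq>\<^sub>m Cm \<sigma> \<tau> m \<phi> i"
  using prun_cons[of \<phi> \<sigma> m] prun_cons[of \<phi> \<tau> i]
  unfolding Cm_def consistent_def map_le_def by (auto simp: map_add_def split: option.splits; metis domI option.inject)

lemma Cm_ge2: "prun \<tau> \<phi> i \<subseteq>\<^sub>m Cm \<sigma> \<tau> m \<phi> i"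
  unfolding Cm_def by (rule map_le_map_add)

lemma Cm_det:
  assumes "consistent \<phi>' (Cm \<sigma> \<tau> m \<phi> i)"
  shows "prun \<sigma> \<phi>' m = prun \<sigma> \<phi> m" "prun \<tau> \<phi>' i = prun \<tau> \<phi> i" "Cm \<sigma> \<tau> m \<phi>' i = Cm \<sigma> \<tau> m \<phi> i"
proof -
  show 1: "prun \<sigma> \<phi>' m = prun \<sigma> \<phi> m" using prun_det cons_le[OF assms Cm_ge1] by blast
  show 2: "prun \<tau> \<phi>' i = prun \<tau> \<phi> i" using prun_det cons_le[OF assms Cm_ge2] by blast
  show "Cm \<sigma> \<tau> m \<phi>' i = Cm \<sigma> \<tau> m \<phi> i" by (simp add: Cm_def 1 2)
qed

lemma dom_Cm: "dom (Cm \<sigma> \<tau> m \<phi> i) = dom (prun \<sigma> \<phi> m) \<union> dom (prun \<tau> \<phi> i)"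
  by (auto simp: Cm_def)



definition EE :: "('e::finite \<Rightarrow> 'o::finite) pmf \<Rightarrow> (('e \<Rightarrow> 'o) \<Rightarrow> real) \<Rightarrow> real" where
  "EE p X = (\<Sum>\<phi>\<in>UNIV. pmf p \<phi> * X \<phi>)"

lemma expectation_EE: "measure_pmf.expectation p X = EE p (X :: ('e::finite \<Rightarrow> 'o::finite) \<Rightarrow> real)"
  unfolding EE_def by (subst integral_measure_pmf[where A=UNIV]) auto

lemma prob_cons_sum: "prob_cons p \<psi> = (\<Sum>\<phi>\<in>{\<phi>. consistent \<phi> \<psi>}. pmf p \<phi>)"
  for p :: "('e::finite \<Rightarrow> 'o::finite) pmf"
  unfolding prob_cons_def by (simp add: measure_measure_pmf_finite)

lemma prob_cons_pos: "consistent \<phi> \<psi> \<Longrightarrow> pmf p \<phi> > 0 \<Longrightarrow> prob_cons p \<psi> > 0"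
  for p :: "('e::finite \<Rightarrow> 'o::finite) pmf"
  unfolding prob_cons_sum
  by (rule less_le_trans[of _ "pmf p \<phi>"]) (auto intro!: member_le_sum)

lemma cexp_cong: "(\<And>\<phi>'. consistent \<phi>' \<psi> \<Longrightarrow> X \<phi>' = Y \<phi>') \<Longrightarrow> cexp p \<psi> X = cexp p \<psi> Y"
  unfolding cexp_def by (auto intro!: sum.cong)

lemma cexp_zero: "cexp p \<psi> (\<lambda>_. 0) = 0"
  unfolding cexp_def by simp

lemma EE_diff: "EE p (\<lambda>\<phi>. X \<phi> - Y \<phi>) = EE p X - EE p Y"
  unfolding EE_def by (simp add: right_diff_distrib sum_subtractf)

lemma EE_add: "EE p (\<lambda>\<phi>. X \<phi> + Y \<phi>) = EE p X + EE p Y"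
  unfolding EE_def by (simp add: distrib_left sum.distrib)

lemma EE_sum: "EE p (\<lambda>\<phi>. \<Sum>i\<in>I. X i \<phi>) = (\<Sum>i\<in>I. EE p (X i))"
  unfolding EE_def by (simp add: sum_distrib_left sum.swap[of _ I])

lemma EE_mono: "(\<And>\<phi>. pmf p \<phi> > 0 \<Longrightarrow> X \<phi> \<le> Y \<phi>) \<Longrightarrow> EE p X \<le> EE p Y"
  unfolding EE_def
  by (rule sum_mono) (metis pmf_nonneg mult_left_mono order_le_less mult_zero_left order_refl)

lemma EE_cmult: "EE p (\<lambda>\<phi>. c * X \<phi>) = c * EE p X"
  unfolding EE_def by (simp add: sum_distrib_left mult.left_commute)

lemma tower:
  fixes p :: "('e::finite \<Rightarrow> 'o::finite) pmf"
  assumes A: "\<And>\<phi>. consistent \<phi> (\<Psi> \<phi>)"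
    and B: "\<And>\<phi> \<phi>'. consistent \<phi>' (\<Psi> \<phi>) \<Longrightarrow> \<Psi> \<phi>' = \<Psi> \<phi>"
  shows "EE p X = EE p (\<lambda>\<phi>. cexp p (\<Psi> \<phi>) X)"
proof -
  define K where "K \<phi> = {\<phi>'. \<Psi> \<phi>' = \<Psi> \<phi>}" for \<phi>
  define S where "S \<phi> = (\<Sum>\<phi>'\<in>K \<phi>. pmf p \<phi>')" for \<phi>
  have cK: "{\<phi>'. consistent \<phi>' (\<Psi> \<phi>)} = K \<phi>" for \<phi>
    unfolding K_def using A B by metis
  have PC: "prob_cons p (\<Psi> \<phi>) = S \<phi>" for \<phi>
    unfolding prob_cons_sum cK S_def ..
  have SK: "\<phi>' \<in> K \<phi> \<Longrightarrow> S \<phi>' = S \<phi>" for \<phi> \<phi>'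
    unfolding S_def K_def by simp
  have "EE p (\<lambda>\<phi>. cexp p (\<Psi> \<phi>) X) = (\<Sum>\<phi>\<in>UNIV. \<Sum>\<phi>'\<in>K \<phi>. pmf p \<phi> * (pmf p \<phi>' * X \<phi>') / S \<phi>')"
    unfolding EE_def cexp_def cK PC
    by (rule sum.cong[OF refl]) (auto simp: sum_distrib_left sum_divide_distrib SK intro!: sum.cong)
  also have "\<dots> = (\<Sum>\<phi>\<in>UNIV. \<Sum>\<phi>'\<in>UNIV. if \<Psi> \<phi>' = \<Psi> \<phi> then pmf p \<phi> * (pmf p \<phi>' * X \<phi>') / S \<phi>' else 0)"
    unfolding K_def by (simp add: sum.If_cases)
  also have "\<dots> = (\<Sum>\<phi>'\<in>UNIV. \<Sum>\<phi>\<in>UNIV. if \<Psi> \<phi>' = \<Psi> \<phi> then pmf p \<phi> * (pmf p \<phi>' * X \<phi>') / S \<phi>' else 0)"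
    by (rule sum.swap)
  also have "\<dots> = (\<Sum>\<phi>'\<in>UNIV. S \<phi>' * (pmf p \<phi>' * X \<phi>') / S \<phi>')"
  proof (rule sum.cong[OF refl])
    fix \<phi>' :: "'e \<Rightarrow> 'o"
    have "(\<Sum>\<phi>\<in>UNIV. if \<Psi> \<phi>' = \<Psi> \<phi> then pmf p \<phi> * (pmf p \<phi>' * X \<phi>') / S \<phi>' else 0)
        = (\<Sum>\<phi>\<in>K \<phi>'. pmf p \<phi> * (pmf p \<phi>' * X \<phi>') / S \<phi>')"
      unfolding K_def by (simp add: sum.If_cases eq_commute)
    also have "\<dots> = S \<phi>' * (pmf p \<phi>' * X \<phi>') / S \<phi>'"
      unfolding S_def by (simp add: sum_distrib_right sum_divide_distrib)
    finally show "(\<Sum>\<phi>\<in>UNIV. if \<Psi> \<phi>' = \<Psi> \<phi> then pmf p \<phi> * (pmf p \<phi>' * X \<phi>') / S \<phi>' else 0)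
        = S \<phi>' * (pmf p \<phi>' * X \<phi>') / S \<phi>'" .
  qed
  also have "\<dots> = EE p X"
    unfolding EE_def
  proof (rule sum.cong[OF refl])
    fix \<phi>'
    show "S \<phi>' * (pmf p \<phi>' * X \<phi>') / S \<phi>' = pmf p \<phi>' * X \<phi>'"
    proof (cases "S \<phi>' = 0")
      case True
      have "pmf p \<phi>' \<le> S \<phi>'" unfolding S_def by (rule member_le_sum) (auto simp: K_def)
      then have "pmf p \<phi>' = 0" using True pmf_nonneg[of p \<phi>'] by linarith
      then show ?thesis by simp
    qed simp
  qed
  finally show ?thesis ..
qed



definition gg :: "('e::finite \<Rightarrow> 'o::finite) pmf \<Rightarrow> ('e set \<Rightarrow> ('e \<Rightarrow> 'o) \<Rightarrow> real)
   \<Rightarrow> ('e, 'o) policy \<Rightarrow> ('e, 'o) policy \<Rightarrow> nat \<Rightarrow> nat \<Rightarrow> ('e \<Rightarrow> 'o) \<Rightarrow> real" where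
  "gg p f \<sigma> \<tau> m i \<phi> = (case \<tau> (prun \<tau> \<phi> i) of None \<Rightarrow> 0
     | Some e \<Rightarrow> if e \<in> dom (Cm \<sigma> \<tau> m \<phi> i) then 0 else favg_marg p f e (Cm \<sigma> \<tau> m \<phi> i))"

lemma tele_step:
  fixes p :: "('e::finite \<Rightarrow> 'o::finite) pmf"
  shows "EE p (\<lambda>\<phi>. f (dom (Cm \<sigma> \<tau> m \<phi> (Suc i))) \<phi>)
       = EE p (\<lambda>\<phi>. f (dom (Cm \<sigma> \<tau> m \<phi> i)) \<phi>) + EE p (gg p f \<sigma> \<tau> m i)"
proof -
  define Y where "Y \<phi> = f (dom (Cm \<sigma> \<tau> m \<phi> (Suc i))) \<phi> - f (dom (Cm \<sigma> \<tau> m \<phi> i)) \<phi>" for \<phi>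
  have "EE p Y = EE p (\<lambda>\<phi>. cexp p (Cm \<sigma> \<tau> m \<phi> i) Y)"
    by (rule tower) (auto intro: Cm_cons Cm_det)
  also have "\<dots> = EE p (gg p f \<sigma> \<tau> m i)"
  proof -
    have "cexp p (Cm \<sigma> \<tau> m \<phi> i) Y = gg p f \<sigma> \<tau> m i \<phi>" for \<phi>
    proof -
      let ?C = "Cm \<sigma> \<tau> m \<phi> i"
      have Yeq: "Y \<phi>' = (case \<tau> (prun \<tau> \<phi> i) of None \<Rightarrow> 0
          | Some e \<Rightarrow> f (insert e (dom ?C)) \<phi>' - f (dom ?C) \<phi>')" if c: "consistent \<phi>' ?C" for \<phi>'
      proof -
        note d = Cm_det[OF c]
        have "dom (Cm \<sigma> \<tau> m \<phi>' (Suc i)) = (case \<tau> (prun \<tau> \<phi> i) of None \<Rightarrow> dom ?C | Some e \<Rightarrow> insert e (dom ?C))"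
          by (simp add: dom_Cm prun_Suc dom_pstep d split: option.splits)
        moreover have "dom (Cm \<sigma> \<tau> m \<phi>' i) = dom ?C" using d by simp
        ultimately show ?thesis unfolding Y_def by (simp split: option.splits)
      qed
      show ?thesis
      proof (cases "\<tau> (prun \<tau> \<phi> i)")
        case None
        then have "cexp p ?C Y = cexp p ?C (\<lambda>_. 0)" by (intro cexp_cong) (simp add: Yeq)
        then show ?thesis by (simp add: cexp_zero gg_def None)
      next
        case (Some e)
        show ?thesis
        proof (cases "e \<in> dom ?C")
          case True
          then have "cexp p ?C Y = cexp p ?C (\<lambda>_. 0)" by (intro cexp_cong) (simp add: Yeq Some insert_absorb)
          then show ?thesis by (simp add: cexp_zero gg_def Some True)
        next
          case False
          have "cexp p ?C Y = favg_marg p f e ?C"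
            unfolding favg_marg_def by (intro cexp_cong) (simp add: Yeq Some)
          then show ?thesis by (simp add: gg_def Some False)
        qed
      qed
    qed
    then show ?thesis by simp
  qed
  finally show ?thesis unfolding Y_def EE_diff by simp
qed

lemma tele:
  fixes p :: "('e::finite \<Rightarrow> 'o::finite) pmf"
  shows "EE p (\<lambda>\<phi>. f (dom (prun \<sigma> \<phi> m) \<union> dom (prun \<tau> \<phi> n)) \<phi>)
       = EE p (\<lambda>\<phi>. f (dom (prun \<sigma> \<phi> m)) \<phi>) + (\<Sum>i<n. EE p (gg p f \<sigma> \<tau> m i))"
proof (induction n)
  case 0 then show ?case by simp
next
  case (Suc n)
  then show ?case using tele_step[of p f \<sigma> \<tau> m n] by (simp add: dom_Cm)
qed

lemma gg_nonneg:
  fixes p :: "('e::finite \<Rightarrow> 'o::finite) pmf"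
  assumes mono: "adaptive_monotone p f" and pos: "pmf p \<phi> > 0"
  shows "gg p f \<sigma> \<tau> m i \<phi> \<ge> 0"
  using mono prob_cons_pos[OF Cm_cons pos] unfolding gg_def adaptive_monotone_def
  by (auto split: option.splits)

lemma gg_upper:
  fixes p :: "('e::finite \<Rightarrow> 'o::finite) pmf"
  assumes sub: "adaptive_submodular p f" and pos: "pmf p \<phi> > 0"
  shows "gg p f \<sigma> \<tau> m i \<phi> \<le> (case \<tau> (prun \<tau> \<phi> i) of None \<Rightarrow> 0
     | Some e \<Rightarrow> if e \<in> dom (prun \<sigma> \<phi> m) \<union> dom (prun \<tau> \<phi> i) then 0 else favg_marg p f e (prun \<sigma> \<phi> m))"
  using sub prob_cons_pos[OF Cm_cons pos] Cm_ge1[of \<sigma> \<phi> m \<tau> i] unfolding gg_def adaptive_submodular_def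
  by (auto split: option.splits simp: dom_Cm)

lemma Esel_prun: "Esel \<sigma> \<phi> = dom (prun \<sigma> \<phi> (card (UNIV :: 'e set)))"
  for \<sigma> :: "('e::finite, 'o) policy"
  by (simp add: Esel_def)

lemma concat_mono:
  fixes p :: "('e::finite \<Rightarrow> 'o::finite) pmf"
  assumes mono: "adaptive_monotone p f"
  shows "EE p (\<lambda>\<phi>. f (Esel \<sigma> \<phi>) \<phi>) \<le> EE p (\<lambda>\<phi>. f (Esel \<sigma> \<phi> \<union> Esel \<tau> \<phi>) \<phi>)"
proof -
  have "(\<Sum>i<card (UNIV::'e set). EE p (gg p f \<sigma> \<tau> (card (UNIV::'e set)) i)) \<ge> 0"
  proof (rule sum_nonneg)
    fix i
    have "EE p (\<lambda>_. 0) \<le> EE p (gg p f \<sigma> \<tau> (card (UNIV::'e set)) i)"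
      by (rule EE_mono) (rule gg_nonneg[OF mono])
    then show "EE p (gg p f \<sigma> \<tau> (card (UNIV::'e set)) i) \<ge> 0" by (simp add: EE_def)
  qed
  then show ?thesis unfolding Esel_prun by (simp add: tele)
qed



lemma sum_gg_bound:
  fixes p :: "('e::finite \<Rightarrow> 'o::finite) pmf"
  assumes sub: "adaptive_submodular p f" and pos: "pmf p \<phi> > 0"
  shows "(\<Sum>i<n. gg p f \<sigma> \<tau> m i \<phi>)
     \<le> (\<Sum>e\<in>dom (prun \<tau> \<phi> n) - dom (prun \<sigma> \<phi> m). favg_marg p f e (prun \<sigma> \<phi> m))"
proof (induction n)
  case 0 then show ?case by simp
next
  case (Suc n)
  let ?A = "dom (prun \<sigma> \<phi> m)" and ?D = "dom (prun \<tau> \<phi> n)"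
  let ?v = "\<lambda>e. favg_marg p f e (prun \<sigma> \<phi> m)"
  note up = gg_upper[OF sub pos, of \<sigma> \<tau> m n]
  show ?case
  proof (cases "\<tau> (prun \<tau> \<phi> n)")
    case None
    then show ?thesis using Suc up by (simp add: prun_Suc dom_pstep)
  next
    case (Some e)
    show ?thesis
    proof (cases "e \<in> ?A \<union> ?D")
      case True
      then have "insert e ?D - ?A = ?D - ?A" by auto
      then show ?thesis using Suc up True by (simp add: prun_Suc dom_pstep Some)
    next
      case False
      then have "insert e ?D - ?A = insert e (?D - ?A)" "e \<notin> ?D - ?A" by auto
      then show ?thesis using Suc up False by (simp add: prun_Suc dom_pstep Some)
    qed
  qed
qed

lemma prun_none: "prun (\<lambda>_. None) \<phi> m = Map.empty"
  by (induction m) (simp_all add: prun_Suc pstep_def)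

lemma gg_none: "gg p f (\<lambda>_. None) \<tau> m i \<phi> = (case \<tau> (prun \<tau> \<phi> i) of None \<Rightarrow> 0
     | Some e \<Rightarrow> if e \<in> dom (prun \<tau> \<phi> i) then 0 else favg_marg p f e (prun \<tau> \<phi> i))"
  unfolding gg_def Cm_def prun_none empty_map_add ..

lemma cum_Suc: "cum c (Suc z) = cum c z + c (Suc z)"
  by (simp add: cum_def)

lemma cum_0[simp]: "cum c 0 = 0" by (simp add: cum_def)

lemma cum_mono: "y \<le> z \<Longrightarrow> cum c y \<le> cum c z"
  unfolding cum_def by (rule sum_mono2) auto

lemma cum_pred: "z \<ge> 1 \<Longrightarrow> cum c z = cum c (z - 1) + c z"
  using cum_Suc[of c "z - 1"] by simp

lemma round_of_eq:
  assumes "z \<ge> 1" "cum c (z - 1) \<le> t" "t < cum c z"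
  shows "round_of c t = z"
  unfolding round_of_def
proof (rule Least_equality)
  show "t < cum c z" by fact
  fix y assume "t < cum c y"
  show "z \<le> y"
  proof (rule ccontr)
    assume "\<not> z \<le> y"
    then have "cum c y \<le> cum c (z - 1)" by (intro cum_mono) simp
    then show False using assms \<open>t < cum c y\<close> by simp
  qed
qed

lemma block_sum:
  fixes h :: "nat \<Rightarrow> real"
  shows "(\<Sum>z\<in>{1..b}. \<Sum>t\<in>{cum c (z - 1)..<cum c z}. h t) = (\<Sum>t<cum c b. h t)"
proof (induction b)
  case 0 then show ?case by simp
next
  case (Suc b)
  have "(\<Sum>t<cum c (Suc b). h t) = (\<Sum>t\<in>{0..<cum c b}. h t) + (\<Sum>t\<in>{cum c b..<cum c (Suc b)}. h t)"
    using sum.atLeastLessThan_concat[of 0 "cum c b" "cum c (Suc b)" h]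
    by (simp add: cum_Suc atLeast0LessThan)
  then show ?case using Suc by (simp add: atLeast0LessThan)
qed



lemma greedy_bound:
  fixes p :: "('e::finite \<Rightarrow> 'o::finite) pmf" and \<pi>ma :: "('e, 'o) policy"
    and f :: "'e set \<Rightarrow> ('e \<Rightarrow> 'o) \<Rightarrow> real"
  assumes disj: "\<forall>z\<in>{1..b}. \<forall>z'\<in>{1..b}. z \<noteq> z' \<longrightarrow> Ez z \<inter> Ez z' = {}"
    and cover: "(\<Union>z\<in>{1..b}. Ez z) = UNIV"
    and kpos: "\<forall>z\<in>{1..b}. 0 < k z \<and> k z \<le> card (Ez z)"
    and mono: "adaptive_monotone p f"
    and sub: "adaptive_submodular p f"
    and ma: "greedy_policy p b Ez (\<lambda>\<psi> e. favg_marg p f e \<psi>) (\<lambda>z. (k z + 1) div 2) \<pi>ma"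
    and indep: "pm_indep b Ez k Os" and pos: "pmf p \<phi> > 0"
  shows "(\<Sum>e\<in>Os - dom (prun \<pi>ma \<phi> (card (UNIV::'e set))). favg_marg p f e (prun \<pi>ma \<phi> (card (UNIV::'e set))))
    \<le> 2 * (\<Sum>t<card (UNIV::'e set). gg p f (\<lambda>_. None) \<pi>ma (card (UNIV::'e set)) t \<phi>)"
proof -
  define c where "c z = (k z + 1) div 2" for z
  define \<psi> where "\<psi> t = prun \<pi>ma \<phi> t" for t
  define N where "N = cum c b"
  define T where "T = card (UNIV::'e set)"
  define h where "h t = gg p f (\<lambda>_. None) \<pi>ma T t \<phi>" for t
  define v where "v e = favg_marg p f e (\<psi> T)" for e
  define A where "A = dom (\<psi> T)"
  define B where "B z = (\<Sum>t\<in>{cum c (z - 1)..<cum c z}. h t)" for z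
  have G: "\<exists>e. \<pi>ma (\<psi> t) = Some e \<and> e \<in> Ez (round_of c t) - dom (\<psi> t) \<and>
       (\<forall>e'\<in>Ez (round_of c t) - dom (\<psi> t). favg_marg p f e' (\<psi> t) \<le> favg_marg p f e (\<psi> t))"
    if "t < N" for t
    using ma pos that unfolding greedy_policy_def Let_def c_def[abs_def] \<psi>_def N_def by blast
  have cardt: "t \<le> N \<Longrightarrow> card (dom (\<psi> t)) = t" for t
  proof (induction t)
    case 0 then show ?case by (simp add: \<psi>_def)
  next
    case (Suc t)
    then obtain e where e: "\<pi>ma (\<psi> t) = Some e" "e \<notin> dom (\<psi> t)" using G[of t] by auto
    have "dom (\<psi> (Suc t)) = insert e (dom (\<psi> t))"
      using e by (simp add: \<psi>_def prun_Suc dom_pstep)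
    then show ?case using Suc e by simp
  qed
  have NT: "N \<le> T"
    using cardt[of N] card_mono[of UNIV "dom (\<psi> N)"] unfolding T_def by simp
  have hnn: "h t \<ge> 0" for t unfolding h_def by (rule gg_nonneg[OF mono pos])
  have PT: "prob_cons p (\<psi> T) > 0" unfolding \<psi>_def by (rule prob_cons_pos[OF prun_cons pos])
  have key: "v e \<le> h t" if z: "z \<in> {1..b}" and e: "e \<in> Ez z" "e \<notin> A"
      and t: "cum c (z - 1) \<le> t" "t < cum c z" for z e t
  proof -
    have "cum c z \<le> cum c b" using z by (intro cum_mono) simp
    then have tN: "t < N" using t unfolding N_def by simp
    have rz: "round_of c t = z" using z t by (intro round_of_eq) auto
    obtain et where et: "\<pi>ma (\<psi> t) = Some et" "et \<in> Ez z - dom (\<psi> t)"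
      "\<forall>e'\<in>Ez z - dom (\<psi> t). favg_marg p f e' (\<psi> t) \<le> favg_marg p f et (\<psi> t)"
      using G[OF tN] rz by auto
    have le: "\<psi> t \<subseteq>\<^sub>m \<psi> T" unfolding \<psi>_def by (rule prun_mono) (use tN NT in simp)
    then have "dom (\<psi> t) \<subseteq> A" unfolding A_def by (rule map_le_implies_dom_le)
    then have en: "e \<notin> dom (\<psi> t)" using e by auto
    have "v e \<le> favg_marg p f e (\<psi> t)"
      using sub le PT e unfolding adaptive_submodular_def v_def A_def by blast
    also have "\<dots> \<le> favg_marg p f et (\<psi> t)" using et(3) e en by blast
    also have "\<dots> = h t" using et unfolding h_def gg_none \<psi>_def by simp
    finally show ?thesis .
  qed
  have per: "(\<Sum>e\<in>(Os - A) \<inter> Ez z. v e) \<le> 2 * B z" if z: "z \<in> {1..b}" for z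
  proof -
    have "k z > 0" using kpos z by blast
    then have cz: "c z \<ge> 1" unfolding c_def by linarith
    have Bnn: "B z \<ge> 0" unfolding B_def by (rule sum_nonneg) (rule hnn)
    have cardb: "card {cum c (z - 1)..<cum c z} = c z" using cum_pred[of z c] z by simp
    have blk: "real (c z) * v e \<le> B z" if "e \<in> (Os - A) \<inter> Ez z" for e
    proof -
      have "(\<Sum>t\<in>{cum c (z - 1)..<cum c z}. v e) \<le> B z"
        unfolding B_def by (rule sum_mono) (use key[OF z] that in auto)
      then show ?thesis using cardb by simp
    qed
    have "card ((Os - A) \<inter> Ez z) \<le> card (Os \<inter> Ez z)" by (rule card_mono) auto
    also have "\<dots> \<le> k z" using indep z unfolding pm_indep_def by blast
    also have "\<dots> \<le> 2 * c z" unfolding c_def by simp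
    finally have cardS: "card ((Os - A) \<inter> Ez z) \<le> 2 * c z" .
    have "real (c z) * (\<Sum>e\<in>(Os - A) \<inter> Ez z. v e) = (\<Sum>e\<in>(Os - A) \<inter> Ez z. real (c z) * v e)"
      by (simp add: sum_distrib_left)
    also have "\<dots> \<le> (\<Sum>e\<in>(Os - A) \<inter> Ez z. B z)" by (rule sum_mono) (rule blk)
    also have "\<dots> = real (card ((Os - A) \<inter> Ez z)) * B z" by simp
    also have "\<dots> \<le> real (2 * c z) * B z" using cardS Bnn by (intro mult_right_mono) auto
    also have "\<dots> = real (c z) * (2 * B z)" by simp
    finally show ?thesis using cz by (simp add: mult_le_cancel_left_pos)
  qed
  have part: "(\<Sum>e\<in>Os - A. v e) = (\<Sum>z\<in>{1..b}. \<Sum>e\<in>(Os - A) \<inter> Ez z. v e)"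
  proof -
    have "Os - A = (\<Union>z\<in>{1..b}. (Os - A) \<inter> Ez z)" using cover by blast
    then have "(\<Sum>e\<in>Os - A. v e) = (\<Sum>e\<in>(\<Union>z\<in>{1..b}. (Os - A) \<inter> Ez z). v e)" by simp
    also have "\<dots> = (\<Sum>z\<in>{1..b}. \<Sum>e\<in>(Os - A) \<inter> Ez z. v e)"
      by (rule sum.UNION_disjoint) (use disj in auto)
    finally show ?thesis .
  qed
  have "(\<Sum>e\<in>Os - A. v e) \<le> (\<Sum>z\<in>{1..b}. 2 * B z)" unfolding part by (rule sum_mono) (rule per)
  also have "\<dots> = 2 * (\<Sum>t<N. h t)" unfolding B_def N_def using block_sum[of h c b] by (simp add: sum_distrib_left[symmetric])
  also have "\<dots> \<le> 2 * (\<Sum>t<T. h t)" using NT hnn by (simp add: sum_mono2)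
  finally show ?thesis unfolding v_def A_def h_def T_def \<psi>_def .
qed



theorem lemma2:
  fixes p :: "('e::finite \<Rightarrow> 'o::finite) pmf"
    and f :: "'e set \<Rightarrow> ('e \<Rightarrow> 'o) \<Rightarrow> real"
    and b :: nat and Ez :: "nat \<Rightarrow> 'e set" and k :: "nat \<Rightarrow> nat"
    and \<pi>mw \<pi>ma \<pi> :: "('e, 'o) policy"
  assumes disj: "\<forall>z\<in>{1..b}. \<forall>z'\<in>{1..b}. z \<noteq> z' \<longrightarrow> Ez z \<inter> Ez z' = {}"
    and cover: "(\<Union>z\<in>{1..b}. Ez z) = UNIV"
    and kpos: "\<forall>z\<in>{1..b}. 0 < k z \<and> k z \<le> card (Ez z)"
    and nonneg: "\<forall>S \<phi>. f S \<phi> \<ge> 0"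
    and mono: "adaptive_monotone p f"
    and submod: "adaptive_submodular p f"
    and mw: "greedy_policy p b Ez (\<lambda>\<psi> e. fwc_marg p f e \<psi>) (\<lambda>z. k z div 2) \<pi>mw"
    and ma: "greedy_policy p b Ez (\<lambda>\<psi> e. favg_marg p f e \<psi>) (\<lambda>z. (k z + 1) div 2) \<pi>ma"
    and feas: "feasible_policy p b Ez k \<pi>"
  shows "favg_pol p f \<pi> \<le> 3 * favg_concat p f \<pi>mw \<pi>ma"
proof -
  define T where "T = card (UNIV::'e set)"
  have ES: "Esel \<sigma> \<phi> = dom (prun \<sigma> \<phi> T)" for \<sigma> :: "('e, 'o) policy" and \<phi>
    unfolding T_def by (rule Esel_prun)
  define FA where "FA = EE p (\<lambda>\<phi>. f (Esel \<pi>ma \<phi>) \<phi>)"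
  have s1: "favg_pol p f \<pi> \<le> EE p (\<lambda>\<phi>. f (Esel \<pi>ma \<phi> \<union> Esel \<pi> \<phi>) \<phi>)"
    unfolding favg_pol_def expectation_EE using concat_mono[OF mono, of \<pi> \<pi>ma] by (simp add: Un_commute)
  have t1: "EE p (\<lambda>\<phi>. f (Esel \<pi>ma \<phi> \<union> Esel \<pi> \<phi>) \<phi>) = FA + (\<Sum>i<T. EE p (gg p f \<pi>ma \<pi> T i))"
    unfolding FA_def ES by (rule tele)
  have t2: "FA = EE p (\<lambda>\<phi>. f {} \<phi>) + (\<Sum>i<T. EE p (gg p f (\<lambda>_. None) \<pi>ma T i))"
    unfolding FA_def ES using tele[of p f "\<lambda>_. None" T \<pi>ma T] by (simp add: prun_none)
  have "(\<Sum>i<T. EE p (gg p f \<pi>ma \<pi> T i)) = EE p (\<lambda>\<phi>. \<Sum>i<T. gg p f \<pi>ma \<pi> T i \<phi>)"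
    by (rule EE_sum[symmetric])
  also have "\<dots> \<le> EE p (\<lambda>\<phi>. 2 * (\<Sum>t<T. gg p f (\<lambda>_. None) \<pi>ma T t \<phi>))"
  proof (rule EE_mono)
    fix \<phi> assume pos: "pmf p \<phi> > 0"
    have "(\<Sum>i<T. gg p f \<pi>ma \<pi> T i \<phi>)
       \<le> (\<Sum>e\<in>dom (prun \<pi> \<phi> T) - dom (prun \<pi>ma \<phi> T). favg_marg p f e (prun \<pi>ma \<phi> T))"
      by (rule sum_gg_bound[OF submod pos])
    also have "\<dots> \<le> 2 * (\<Sum>t<T. gg p f (\<lambda>_. None) \<pi>ma T t \<phi>)"
      unfolding T_def
    proof (rule greedy_bound[OF disj cover kpos mono submod ma _ pos])
      show "pm_indep b Ez k (dom (prun \<pi> \<phi> (card (UNIV::'e set))))"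
        using feas pos unfolding feasible_policy_def Esel_def by blast
    qed
    finally show "(\<Sum>i<T. gg p f \<pi>ma \<pi> T i \<phi>) \<le> 2 * (\<Sum>t<T. gg p f (\<lambda>_. None) \<pi>ma T t \<phi>)" .
  qed
  also have "\<dots> = 2 * (\<Sum>t<T. EE p (gg p f (\<lambda>_. None) \<pi>ma T t))"
    by (simp add: EE_cmult EE_sum)
  finally have s2: "(\<Sum>i<T. EE p (gg p f \<pi>ma \<pi> T i)) \<le> 2 * (\<Sum>t<T. EE p (gg p f (\<lambda>_. None) \<pi>ma T t))" .
  have e0: "EE p (\<lambda>\<phi>. f {} \<phi>) \<ge> 0"
    using EE_mono[of p "\<lambda>_. 0" "\<lambda>\<phi>. f {} \<phi>"] nonneg by (simp add: EE_def)
  have s3: "FA \<le> favg_concat p f \<pi>mw \<pi>ma"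
    unfolding favg_concat_def expectation_EE FA_def using concat_mono[OF mono, of \<pi>ma \<pi>mw] by (simp add: Un_commute)
  show ?thesis using s1 t1 t2 s2 e0 s3 by linarith
qed

end
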